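(* Let $a,b,c,d,e,f,k,l,p,q,r,s\ge0$ be integers with $a+b$, $c+d$, $e+f$, $k+l$, $p+q$, $r+s$ positive, and let $$E=\begin{bmatrix} J_{k,a}&-J_{k,b}&J_{k,c}&-J_{k,d}&0&0\\ -J_{l,a}&J_{l,b}&-J_{l,c}&J_{l,d}&0&0\\ J_{p,a}&-J_{p,b}&0&0&J_{p,e}&-J_{p,f}\\ -J_{q,a}&J_{q,b}&0&0&-J_{q,e}&J_{q,f}\\ 0&0&J_{r,c}&-J_{r,d}&-J_{r,e}&J_{r,f}\\ 0&0&-J_{s,c}&J_{s,d}&J_{s,e}&-J_{s,f} \end{bmatrix}$$ with $E\mathbf 1=0$ and $\mathbf 1^TE=0^T$. Then $E$ is realizable if and only if one of the following holds: (i) $a+b$, $c+d$, $e+f$, $k+l$, $p+q$ and $r+s$ are all even; (ii) either $a+b$, $c+d$, $e+f$ are all odd or $k+l$, $p+q$, $r+s$ are all odd, and $\frac{e+f}{k+l}=\frac{c+d}{p+q}=\frac{a+b}{r+s}$.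
   Context: $J_{p,q}$ is the $p\times q$ all-ones matrix. Two $(0,1)$ matrices $A,B$ are Gram mates if $AA^T=BB^T$, $A^TA=B^TB$ and $A\neq B$. A $(0,1,-1)$ matrix $E$ with $E\mathbf 1=0$, $\mathbf 1^TE=0^T$ is realizable if there is a $(0,1)$ matrix $A$ such that $A$ and $A+E$ are Gram mates. *)

theory Defs
  imports "Jordan_Normal_Form.Matrix"
begin

definition zero_one_mat :: "int mat \<Rightarrow> bool" where
  "zero_one_mat A \<longleftrightarrow> (\<forall>i<dim_row A. \<forall>j<dim_col A. A $$ (i,j) \<in> {0,1})"

definition gram_mates :: "int mat \<Rightarrow> int mat \<Rightarrow> bool" where
  "gram_mates A B \<longleftrightarrow> zero_one_mat A \<and> zero_one_mat B \<and>
     dim_row A = dim_row B \<and> dim_col A = dim_col B \<and>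
     A * transpose_mat A = B * transpose_mat B \<and>
     transpose_mat A * A = transpose_mat B * B \<and> A \<noteq> B"

definition realizable :: "int mat \<Rightarrow> bool" where
  "realizable E \<longleftrightarrow> (\<exists>A \<in> carrier_mat (dim_row E) (dim_col E). gram_mates A (A + E))"

fun blk :: "nat list \<Rightarrow> nat \<Rightarrow> nat" where
  "blk [] i = 0"
| "blk (x # xs) i = (if i < x then 0 else Suc (blk xs (i - x)))"

text \<open>Sign pattern of the 6x6 block matrix (block (u,v) is sign * all-ones matrix).\<close>
definition sign_pattern :: "int list list" where
  "sign_pattern =
    [[ 1, -1,  1, -1,  0,  0],
     [-1,  1, -1,  1,  0,  0],
     [ 1, -1,  0,  0,  1, -1],
     [-1,  1,  0,  0, -1,  1],
     [ 0,  0,  1, -1, -1,  1],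
     [ 0,  0, -1,  1,  1, -1]]"

definition E_mat :: "nat \<Rightarrow> nat \<Rightarrow> nat \<Rightarrow> nat \<Rightarrow> nat \<Rightarrow> nat \<Rightarrow>
                     nat \<Rightarrow> nat \<Rightarrow> nat \<Rightarrow> nat \<Rightarrow> nat \<Rightarrow> nat \<Rightarrow> int mat" where
  "E_mat a b c d e f k l p q r s =
     mat (k+l+p+q+r+s) (a+b+c+d+e+f)
       (\<lambda>(i,j). sign_pattern ! blk [k,l,p,q,r,s] i ! blk [a,b,c,d,e,f] j)"

end

theory Submission
  imports Defs
begin

lemma key2:
  fixes a1 a2 f1 f2 e1 e2 :: "nat \<Rightarrow> int"
  assumes h1: "\<forall>x<N. 2*a1 x = 1 + f1 x - e1 x" and h2: "\<forall>x<N. 2*a2 x = 1 + f2 x - e2 x"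
    and s1: "(\<Sum>x<N. e1 x) = 0" and s2: "(\<Sum>x<N. e2 x) = 0"
  shows "2*((\<Sum>x<N. (a1 x + e1 x)*(a2 x + e2 x)) - (\<Sum>x<N. a1 x * a2 x))
         = (\<Sum>x<N. f1 x * e2 x + e1 x * f2 x)"
proof -
  have pw: "2*((a1 x + e1 x)*(a2 x + e2 x) - a1 x * a2 x) = f1 x * e2 x + e1 x * f2 x + e1 x + e2 x"
    if "x < N" for x
  proof -
    have "2*((a1 x + e1 x)*(a2 x + e2 x) - a1 x * a2 x) = (2*a1 x)*e2 x + e1 x*(2*a2 x) + 2*e1 x*e2 x"
      by (simp add: algebra_simps)
    also have "\<dots> = (1 + f1 x - e1 x)*e2 x + e1 x*(1 + f2 x - e2 x) + 2*e1 x*e2 x"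
      using h1 h2 that by simp
    also have "\<dots> = f1 x * e2 x + e1 x * f2 x + e1 x + e2 x" by (simp add: algebra_simps)
    finally show ?thesis .
  qed
  have "2*((\<Sum>x<N. (a1 x + e1 x)*(a2 x + e2 x)) - (\<Sum>x<N. a1 x * a2 x))
      = (\<Sum>x<N. 2*((a1 x + e1 x)*(a2 x + e2 x) - a1 x * a2 x))"
    by (simp add: sum_subtractf sum_distrib_left)
  also have "\<dots> = (\<Sum>x<N. f1 x * e2 x + e1 x * f2 x + e1 x + e2 x)"
    using pw by (intro sum.cong) auto
  also have "\<dots> = (\<Sum>x<N. f1 x * e2 x + e1 x * f2 x) + (\<Sum>x<N. e1 x) + (\<Sum>x<N. e2 x)"
    by (simp add: sum.distrib)
  finally show ?thesis using s1 s2 by simp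
qed

lemma gram_rows:
  fixes A E :: "int mat"
  assumes A: "A \<in> carrier_mat N M" and E: "E \<in> carrier_mat N M"
    and AF: "\<forall>i<N. \<forall>j<M. 2*A$$(i,j) = 1 + F i j - E$$(i,j)"
    and rs: "\<forall>i<N. (\<Sum>j<M. E$$(i,j)) = 0"
  shows "A * transpose_mat A = (A + E) * transpose_mat (A + E) \<longleftrightarrow>
    (\<forall>i<N. \<forall>i'<N. (\<Sum>j<M. F i j * E$$(i',j) + E$$(i,j) * F i' j) = 0)"
proof -
  have ent1: "(A * transpose_mat A) $$ (i,i') = (\<Sum>j<M. A$$(i,j) * A$$(i',j))"
    if "i < N" "i' < N" for i i'
    using A that by (simp add: scalar_prod_def lessThan_atLeast0)
  have ent2: "((A + E) * transpose_mat (A + E)) $$ (i,i') = (\<Sum>j<M. (A$$(i,j) + E$$(i,j)) * (A$$(i',j) + E$$(i',j)))"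
    if "i < N" "i' < N" for i i'
    using A E that by (simp add: scalar_prod_def lessThan_atLeast0)
  have k: "2*(((A + E) * transpose_mat (A + E)) $$ (i,i') - (A * transpose_mat A) $$ (i,i'))
     = (\<Sum>j<M. F i j * E$$(i',j) + E$$(i,j) * F i' j)" if "i < N" "i' < N" for i i'
    unfolding ent1[OF that] ent2[OF that]
    by (rule key2) (use AF rs that in auto)
  show ?thesis
  proof
    assume eq: "A * transpose_mat A = (A + E) * transpose_mat (A + E)"
    show "\<forall>i<N. \<forall>i'<N. (\<Sum>j<M. F i j * E$$(i',j) + E$$(i,j) * F i' j) = 0"
    proof (intro allI impI)
      fix i i' assume ii: "i < N" "i' < N"
      have "((A + E) * transpose_mat (A + E)) $$ (i,i') = (A * transpose_mat A) $$ (i,i')" using eq by simp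
      then show "(\<Sum>j<M. F i j * E$$(i',j) + E$$(i,j) * F i' j) = 0" using k[OF ii] by simp
    qed
  next
    assume h: "\<forall>i<N. \<forall>i'<N. (\<Sum>j<M. F i j * E$$(i',j) + E$$(i,j) * F i' j) = 0"
    show "A * transpose_mat A = (A + E) * transpose_mat (A + E)"
    proof (rule eq_matI)
      fix i i' assume "i < dim_row ((A + E) * transpose_mat (A + E))" "i' < dim_col ((A + E) * transpose_mat (A + E))"
      then have ii: "i < N" "i' < N" using A E by auto
      show "(A * transpose_mat A) $$ (i, i') = ((A + E) * transpose_mat (A + E)) $$ (i, i')"
        using k[OF ii] h ii by simp
    qed (use A E in auto)
  qed
qed

lemma gram_cols:
  fixes A E :: "int mat"
  assumes A: "A \<in> carrier_mat N M" and E: "E \<in> carrier_mat N M"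
    and AF: "\<forall>i<N. \<forall>j<M. 2*A$$(i,j) = 1 + F i j - E$$(i,j)"
    and cs: "\<forall>j<M. (\<Sum>i<N. E$$(i,j)) = 0"
  shows "transpose_mat A * A = transpose_mat (A + E) * (A + E) \<longleftrightarrow>
    (\<forall>j<M. \<forall>j'<M. (\<Sum>i<N. F i j * E$$(i,j') + E$$(i,j) * F i j') = 0)"
proof -
  have ent1: "(transpose_mat A * A) $$ (j,j') = (\<Sum>i<N. A$$(i,j) * A$$(i,j'))"
    if "j < M" "j' < M" for j j'
    using A that by (simp add: scalar_prod_def lessThan_atLeast0)
  have ent2: "(transpose_mat (A + E) * (A + E)) $$ (j,j') = (\<Sum>i<N. (A$$(i,j) + E$$(i,j)) * (A$$(i,j') + E$$(i,j')))"
    if "j < M" "j' < M" for j j'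
    using A E that by (simp add: scalar_prod_def lessThan_atLeast0)
  have k: "2*((transpose_mat (A + E) * (A + E)) $$ (j,j') - (transpose_mat A * A) $$ (j,j'))
     = (\<Sum>i<N. F i j * E$$(i,j') + E$$(i,j) * F i j')" if "j < M" "j' < M" for j j'
    unfolding ent1[OF that] ent2[OF that]
    by (rule key2) (use AF cs that in auto)
  show ?thesis
  proof
    assume eq: "transpose_mat A * A = transpose_mat (A + E) * (A + E)"
    show "\<forall>j<M. \<forall>j'<M. (\<Sum>i<N. F i j * E$$(i,j') + E$$(i,j) * F i j') = 0"
    proof (intro allI impI)
      fix j j' assume jj: "j < M" "j' < M"
      have "(transpose_mat (A + E) * (A + E)) $$ (j,j') = (transpose_mat A * A) $$ (j,j')" using eq by simp
      then show "(\<Sum>i<N. F i j * E$$(i,j') + E$$(i,j) * F i j') = 0" using k[OF jj] by simp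
    qed
  next
    assume h: "\<forall>j<M. \<forall>j'<M. (\<Sum>i<N. F i j * E$$(i,j') + E$$(i,j) * F i j') = 0"
    show "transpose_mat A * A = transpose_mat (A + E) * (A + E)"
    proof (rule eq_matI)
      fix j j' assume "j < dim_row (transpose_mat (A + E) * (A + E))" "j' < dim_col (transpose_mat (A + E) * (A + E))"
      then have jj: "j < M" "j' < M" using A E by auto
      show "(transpose_mat A * A) $$ (j, j') = (transpose_mat (A + E) * (A + E)) $$ (j, j')"
        using k[OF jj] h jj by simp
    qed (use A E in auto)
  qed
qed

lemma sum_if_const:
  fixes N :: nat
  shows "(\<Sum>i<N. if P i then (c::int) else 0) = int (card {i. i<N \<and> P i}) * c"
proof (induction N)
  case 0
  then show ?case by simp
next
  case (Suc N)
  show ?case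
  proof (cases "P N")
    case True
    have "{i. i<Suc N \<and> P i} = insert N {i. i<N \<and> P i}" using True less_Suc_eq by auto
    then show ?thesis using Suc True by (simp add: algebra_simps)
  next
    case False
    have "{i. i<Suc N \<and> P i} = {i. i<N \<and> P i}" using False less_Suc_eq by auto
    then show ?thesis using Suc False by simp
  qed
qed

lemma parity_sum:
  fixes g :: "nat \<Rightarrow> int" and N :: nat
  assumes "\<forall>x<N. (P x \<longrightarrow> g x \<in> {-1,1}) \<and> (\<not> P x \<longrightarrow> g x = 0)"
  shows "even ((\<Sum>x<N. g x) + int (card {x. x<N \<and> P x}))"
proof -
  have "int (card {x. x<N \<and> P x}) = (\<Sum>x<N. if P x then 1 else 0)"
    using sum_if_const[where N=N and P=P and c=1] by simp
  then have "(\<Sum>x<N. g x) + int (card {x. x<N \<and> P x}) = (\<Sum>x<N. g x + (if P x then 1 else 0))"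
    by (simp add: sum.distrib)
  also have "even \<dots>"
    by (rule dvd_sum) (use assms in auto)
  finally show ?thesis .
qed

lemma per_sum:
  fixes u g :: nat
  assumes "\<forall>y. P (y+g) = (P y :: int)"
  shows "(\<Sum>y\<in>{u..<u+g}. P y) = (\<Sum>y<g. P y)"
proof (induction u)
  case 0
  then show ?case by (simp add: atLeast0LessThan)
next
  case (Suc u)
  have "(\<Sum>y\<in>{u..<Suc (u+g)}. P y) = P u + (\<Sum>y\<in>{Suc u..<Suc (u+g)}. P y)"
    by (rule sum.atLeast_Suc_lessThan) simp
  moreover have "(\<Sum>y\<in>{u..<Suc (u+g)}. P y) = (\<Sum>y\<in>{u..<u+g}. P y) + P (u+g)"
    by (rule sum.atLeastLessThan_Suc) simp
  ultimately have "(\<Sum>y\<in>{Suc u..<Suc (u+g)}. P y) = (\<Sum>y\<in>{u..<u+g}. P y)"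
    using assms[rule_format, of u] by linarith
  then show ?case using Suc by simp
qed

lemma modsum:
  assumes g: "0 < g"
  shows "(\<Sum>y<g*N. F ((u+y) mod g)) = int N * (\<Sum>z<g. (F z :: int))"
proof (induction N)
  case 0
  then show ?case by simp
next
  case (Suc N)
  have split: "{..<g*Suc N} = {..<g*N} \<union> {g*N..<g*N+g}" by auto
  have "(\<Sum>y<g*Suc N. F ((u+y) mod g)) = (\<Sum>y<g*N. F ((u+y) mod g)) + (\<Sum>y\<in>{g*N..<g*N+g}. F ((u+y) mod g))"
    unfolding split by (rule sum.union_disjoint) auto
  also have "(\<Sum>y\<in>{g*N..<g*N+g}. F ((u+y) mod g)) = (\<Sum>y\<in>{u+g*N..<u+g*N+g}. F (y mod g))"
  proof -
    have "(\<Sum>y\<in>{u+g*N..<u+g*N+g}. F (y mod g)) = (\<Sum>y\<in>{g*N..<g*N+g}. F ((y+u) mod g))"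
      using sum.shift_bounds_nat_ivl[of "\<lambda>y. F (y mod g)" "g*N" u "g*N+g"]
      by (simp add: add.commute add.left_commute)
    then show ?thesis by (simp add: add.commute)
  qed
  also have "\<dots> = (\<Sum>y<g. F (y mod g))"
    by (rule per_sum) simp
  also have "\<dots> = (\<Sum>y<g. F y)" by (intro sum.cong) auto
  finally show ?case using Suc by (simp add: algebra_simps)
qed

lemma sum_pm:
  assumes "h \<le> g"
  shows "(\<Sum>z<g. (if z < h then 1 else -1 :: int)) = 2 * int h - int g"
  using assms
proof (induction g)
  case 0 then show ?case by simp
next
  case (Suc g)
  show ?case
  proof (cases "h = Suc g")
    case True
    then have "(\<Sum>z<Suc g. (if z < h then 1 else -1 :: int)) = (\<Sum>z<Suc g. 1)" by (intro sum.cong) auto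
    then show ?thesis using True by simp
  next
    case False
    then have "h \<le> g" using Suc by simp
    then show ?thesis using Suc by simp
  qed
qed

lemma reindex_sum:
  fixes off L M :: nat
  assumes "off + L \<le> M"
  shows "(\<Sum>j<M. if off \<le> j \<and> j < off + L then F (j - off) else (0::int)) = (\<Sum>v<L. F v)"
proof -
  have "(\<Sum>j<M. if off \<le> j \<and> j < off + L then F (j - off) else (0::int)) =
     sum (\<lambda>j. F (j - off)) ({..<M} \<inter> {j. off \<le> j \<and> j < off + L}) + sum (\<lambda>j. 0) ({..<M} \<inter> - {j. off \<le> j \<and> j < off + L})"
    by (rule sum.If_cases) simp
  also have "{..<M} \<inter> {j. off \<le> j \<and> j < off + L} = {0+off..<L+off}" using assms by auto
  also have "(\<Sum>j\<in>{0+off..<L+off}. F (j - off)) = (\<Sum>v\<in>{0..<L}. F v)"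
    using sum.shift_bounds_nat_ivl[of "\<lambda>j. F (j - off)" 0 off L] by simp
  finally show ?thesis by (simp add: atLeast0LessThan)
qed


definition sf :: "nat \<Rightarrow> nat \<Rightarrow> int" where
  "sf x y = (if x = 0 then (if y = 2 then 0 else 1) else if x = 1 then (if y = 1 then 0 else 1)
             else (if y = 0 then 0 else if y = 1 then 1 else -1))"

lemma blk_r:
  fixes x0 x1 x2 x3 x4 x5 :: nat
  shows "i < x0 \<Longrightarrow> blk [x0,x1,x2,x3,x4,x5] i = 0"
   "x0 \<le> i \<Longrightarrow> i < x0+x1 \<Longrightarrow> blk [x0,x1,x2,x3,x4,x5] i = 1"
   "x0+x1 \<le> i \<Longrightarrow> i < x0+x1+x2 \<Longrightarrow> blk [x0,x1,x2,x3,x4,x5] i = 2"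
   "x0+x1+x2 \<le> i \<Longrightarrow> i < x0+x1+x2+x3 \<Longrightarrow> blk [x0,x1,x2,x3,x4,x5] i = 3"
   "x0+x1+x2+x3 \<le> i \<Longrightarrow> i < x0+x1+x2+x3+x4 \<Longrightarrow> blk [x0,x1,x2,x3,x4,x5] i = 4"
   "x0+x1+x2+x3+x4 \<le> i \<Longrightarrow> i < x0+x1+x2+x3+x4+x5 \<Longrightarrow> blk [x0,x1,x2,x3,x4,x5] i = 5"
  by (simp_all, arith+)
declare blk.simps[simp del]

lemma blk_fam: "i < x0+x1+x2+x3+x4+x5 \<Longrightarrow> blk [x0,x1,x2,x3,x4,x5] i div 2 = (if i < x0+x1 then 0 else if i < x0+x1+x2+x3 then 1 else 2)"
proof -
  assume h: "i < x0+x1+x2+x3+x4+x5"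
  consider "i < x0" | "x0 \<le> i" "i < x0+x1" | "x0+x1 \<le> i" "i < x0+x1+x2" | "x0+x1+x2 \<le> i" "i < x0+x1+x2+x3"
    | "x0+x1+x2+x3 \<le> i" "i < x0+x1+x2+x3+x4" | "x0+x1+x2+x3+x4 \<le> i" using h by linarith
  then show ?thesis
  proof cases
    case 1 then show ?thesis by (simp add: blk_r(1))
  next
    case 2 then show ?thesis by (simp add: blk_r(2))
  next
    case 3 then show ?thesis by (simp add: blk_r(3))
  next
    case 4 then show ?thesis by (simp add: blk_r(4) del: blk.simps)
  next
    case 5 then show ?thesis by (simp add: blk_r(5) del: blk.simps)
  next
    case 6 then show ?thesis using h by (simp add: blk_r(6) del: blk.simps)
  qed
qed
lemma blk_lt: "i < x0+x1+x2+x3+x4+x5 \<Longrightarrow> blk [x0,x1,x2,x3,x4,x5] i < 6"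
proof -
  assume h: "i < x0+x1+x2+x3+x4+x5"
  consider "i < x0" | "x0 \<le> i" "i < x0+x1" | "x0+x1 \<le> i" "i < x0+x1+x2" | "x0+x1+x2 \<le> i" "i < x0+x1+x2+x3"
    | "x0+x1+x2+x3 \<le> i" "i < x0+x1+x2+x3+x4" | "x0+x1+x2+x3+x4 \<le> i" using h by linarith
  then show ?thesis
  proof cases
    case 1 then show ?thesis by (simp add: blk_r(1) del: blk.simps)
  next
    case 2 then show ?thesis by (simp add: blk_r(2) del: blk.simps)
  next
    case 3 then show ?thesis by (simp add: blk_r(3) del: blk.simps)
  next
    case 4 then show ?thesis by (simp add: blk_r(4) del: blk.simps)
  next
    case 5 then show ?thesis by (simp add: blk_r(5) del: blk.simps)
  next
    case 6 then show ?thesis using h by (simp add: blk_r(6) del: blk.simps)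
  qed
qed
lemma sp: assumes "bi < 6" "bj < 6"
  shows "sign_pattern ! bi ! bj = (if even bi then 1 else -1) * (if even bj then 1 else -1) * sf (bi div 2) (bj div 2)"
proof -
  have "bi = 0 \<or> bi = 1 \<or> bi = 2 \<or> bi = 3 \<or> bi = 4 \<or> bi = 5" using assms by arith
  moreover have "bj = 0 \<or> bj = 1 \<or> bj = 2 \<or> bj = 3 \<or> bj = 4 \<or> bj = 5" using assms by arith
  ultimately show ?thesis by (elim disjE) (simp_all add: sign_pattern_def sf_def)
qed
definition eta :: "nat \<Rightarrow> int" where "eta x = (if x = 1 then -1 else 1)"

lemma pairR:
  fixes ei ej ph1 ph2 :: int
  assumes "x<3" "y<3" "x\<noteq>y" "ei = 1 \<or> ei = -1" "ej = 1 \<or> ej = -1"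
    "ej * sf y (2-x) * ph1 + ei * sf x (2-y) * ph2 = 0"
  shows "ei * eta x * ph1 = ej * eta y * ph2"
proof -
  have "x = 0 \<or> x = 1 \<or> x = 2" "y = 0 \<or> y = 1 \<or> y = 2" using assms(1,2) by arith+
  then show ?thesis using assms(3-6) by (elim disjE) (simp_all add: sf_def eta_def)
qed

lemma pairC:
  fixes ei ej ps1 ps2 :: int
  assumes "x<3" "y<3" "x\<noteq>y" "ei = 1 \<or> ei = -1" "ej = 1 \<or> ej = -1"
    "ej * sf (2-x) y * ps1 + ei * sf (2-y) x * ps2 = 0"
  shows "ei * eta x * ps1 = ej * eta y * ps2"
proof -
  have "x = 0 \<or> x = 1 \<or> x = 2" "y = 0 \<or> y = 1 \<or> y = 2" using assms(1,2) by arith+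
  then show ?thesis using assms(3-6) by (elim disjE) (simp_all add: sf_def eta_def)
qed

lemma pairR0:
  fixes ei ej g :: int
  assumes "x<3" "y<3" "ei = 1 \<or> ei = -1" "ej = 1 \<or> ej = -1"
  shows "ej * sf y (2-x) * (ei * eta x * g) + ei * sf x (2-y) * (ej * eta y * g) = 0"
proof -
  have "x = 0 \<or> x = 1 \<or> x = 2" "y = 0 \<or> y = 1 \<or> y = 2" using assms(1,2) by arith+
  then show ?thesis using assms(3,4) by (elim disjE) (simp_all add: sf_def eta_def)
qed

lemma pairC0:
  fixes ei ej g :: int
  assumes "x<3" "y<3" "ei = 1 \<or> ei = -1" "ej = 1 \<or> ej = -1"
  shows "ej * sf (2-x) y * (ei * eta (2-x) * g) + ei * sf (2-y) x * (ej * eta (2-y) * g) = 0"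
proof -
  have "x = 0 \<or> x = 1 \<or> x = 2" "y = 0 \<or> y = 1 \<or> y = 2" using assms(1,2) by arith+
  then show ?thesis using assms(3,4) by (elim disjE) (simp_all add: sf_def eta_def)
qed

locale blk6 =
  fixes a b c d e f k l p q r s :: nat
  assumes pos: "a + b > 0" "c + d > 0" "e + f > 0" "k + l > 0" "p + q > 0" "r + s > 0"
    and rs: "E_mat a b c d e f k l p q r s *\<^sub>v vec (a+b+c+d+e+f) (\<lambda>_. 1) = 0\<^sub>v (k+l+p+q+r+s)"
    and cs: "transpose_mat (E_mat a b c d e f k l p q r s) *\<^sub>v vec (k+l+p+q+r+s) (\<lambda>_. 1) = 0\<^sub>v (a+b+c+d+e+f)"
begin

abbreviation "NR \<equiv> k+l+p+q+r+s"
abbreviation "MC \<equiv> a+b+c+d+e+f"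
abbreviation "EE \<equiv> E_mat a b c d e f k l p q r s"

definition R :: "nat \<Rightarrow> nat" where "R i = blk [k,l,p,q,r,s] i div 2"
definition C :: "nat \<Rightarrow> nat" where "C j = blk [a,b,c,d,e,f] j div 2"
definition er :: "nat \<Rightarrow> int" where "er i = (if even (blk [k,l,p,q,r,s] i) then 1 else -1)"
definition ec :: "nat \<Rightarrow> int" where "ec j = (if even (blk [a,b,c,d,e,f] j) then 1 else -1)"
definition ro :: "nat \<Rightarrow> nat" where "ro x = (if x = 0 then 0 else if x = 1 then k+l else k+l+p+q)"
definition cR :: "nat \<Rightarrow> nat" where "cR x = (if x = 0 then k+l else if x = 1 then p+q else r+s)"
definition co :: "nat \<Rightarrow> nat" where "co x = (if x = 0 then 0 else if x = 1 then a+b else a+b+c+d)"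
definition cC :: "nat \<Rightarrow> nat" where "cC x = (if x = 0 then a+b else if x = 1 then c+d else e+f)"

lemma EEc: "EE \<in> carrier_mat NR MC" by (simp add: E_mat_def)

lemma R_val: "i < NR \<Longrightarrow> R i = (if i < k+l then 0 else if i < k+l+p+q then 1 else 2)"
  unfolding R_def by (rule blk_fam)
lemma C_val: "j < MC \<Longrightarrow> C j = (if j < a+b then 0 else if j < a+b+c+d then 1 else 2)"
  unfolding C_def by (rule blk_fam)
lemma R_lt: "i < NR \<Longrightarrow> R i < 3" by (simp add: R_val)
lemma C_lt: "j < MC \<Longrightarrow> C j < 3" by (simp add: C_val)
lemma er_pm: "er i = 1 \<or> er i = -1" by (simp add: er_def)
lemma ec_pm: "ec j = 1 \<or> ec j = -1" by (simp add: ec_def)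

lemma E_entry:
  assumes "i < NR" "j < MC"
  shows "EE $$ (i,j) = er i * ec j * sf (R i) (C j)"
proof -
  have "EE $$ (i,j) = sign_pattern ! blk [k,l,p,q,r,s] i ! blk [a,b,c,d,e,f] j"
    using assms by (simp add: E_mat_def)
  also have "\<dots> = (if even (blk [k,l,p,q,r,s] i) then 1 else -1) * (if even (blk [a,b,c,d,e,f] j) then 1 else -1)
     * sf (blk [k,l,p,q,r,s] i div 2) (blk [a,b,c,d,e,f] j div 2)"
    by (rule sp[OF blk_lt blk_lt]) (use assms in auto)
  also have "\<dots> = er i * ec j * sf (R i) (C j)"
    by (simp add: R_def C_def er_def ec_def)
  finally show ?thesis .
qed

lemma rowsum: "i < NR \<Longrightarrow> (\<Sum>j<MC. EE$$(i,j)) = 0"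
proof -
  assume i: "i < NR"
  have "(EE *\<^sub>v vec MC (\<lambda>_. 1)) $ i = 0" using rs i by simp
  then show ?thesis using i EEc by (simp add: scalar_prod_def lessThan_atLeast0)
qed

lemma colsum: "j < MC \<Longrightarrow> (\<Sum>i<NR. EE$$(i,j)) = 0"
proof -
  assume j: "j < MC"
  have "(transpose_mat EE *\<^sub>v vec NR (\<lambda>_. 1)) $ j = 0" using cs j by simp
  then show ?thesis using j EEc by (simp add: scalar_prod_def lessThan_atLeast0)
qed

lemma R_iff: "i < NR \<Longrightarrow> x < 3 \<Longrightarrow> R i = x \<longleftrightarrow> ro x \<le> i \<and> i < ro x + cR x"
proof -
  assume i: "i < NR" and x: "x < 3"
  have "x = 0 \<or> x = 1 \<or> x = 2" using x by arith
  then show ?thesis using i by (elim disjE) (simp_all add: R_val ro_def cR_def)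
qed

lemma C_iff: "j < MC \<Longrightarrow> x < 3 \<Longrightarrow> C j = x \<longleftrightarrow> co x \<le> j \<and> j < co x + cC x"
proof -
  assume j: "j < MC" and x: "x < 3"
  have "x = 0 \<or> x = 1 \<or> x = 2" using x by arith
  then show ?thesis using j by (elim disjE) (simp_all add: C_val co_def cC_def)
qed

lemma ro_le: "x < 3 \<Longrightarrow> ro x + cR x \<le> NR"
  by (simp add: ro_def cR_def)

lemma co_le: "x < 3 \<Longrightarrow> co x + cC x \<le> MC"
  by (simp add: co_def cC_def)

lemma cardR: "x < 3 \<Longrightarrow> card {i. i < NR \<and> R i = x} = cR x"
proof -
  assume x: "x < 3"
  have "{i. i < NR \<and> R i = x} = {ro x..<ro x + cR x}"
  proof (rule Set.set_eqI)
    fix i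
    show "(i \<in> {i. i < NR \<and> R i = x}) = (i \<in> {ro x..<ro x + cR x})"
    proof (cases "i < NR")
      case True then show ?thesis using R_iff[OF True x] by simp
    next
      case False then show ?thesis using ro_le[OF x] by simp
    qed
  qed
  then show ?thesis by simp
qed

lemma cardC: "x < 3 \<Longrightarrow> card {j. j < MC \<and> C j = x} = cC x"
proof -
  assume x: "x < 3"
  have "{j. j < MC \<and> C j = x} = {co x..<co x + cC x}"
  proof (rule Set.set_eqI)
    fix j
    show "(j \<in> {j. j < MC \<and> C j = x}) = (j \<in> {co x..<co x + cC x})"
    proof (cases "j < MC")
      case True then show ?thesis using C_iff[OF True x] by simp
    next
      case False then show ?thesis using co_le[OF x] by simp
    qed
  qed
  then show ?thesis by simp
qed

lemma F3:
  assumes supp: "\<forall>i<NR. \<forall>j<MC. C j \<noteq> 2 - R i \<longrightarrow> F i j = 0" and i: "i < NR" and i': "i' < NR"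
  shows "(\<Sum>j<MC. F i j * EE$$(i',j)) = er i' * sf (R i') (2 - R i) * (\<Sum>j<MC. ec j * F i j)"
proof -
  have "(\<Sum>j<MC. F i j * EE$$(i',j)) = (\<Sum>j<MC. er i' * sf (R i') (2 - R i) * (ec j * F i j))"
  proof (rule sum.cong[OF refl])
    fix j assume "j \<in> {..<MC}"
    then have j: "j < MC" by simp
    show "F i j * EE$$(i',j) = er i' * sf (R i') (2 - R i) * (ec j * F i j)"
    proof (cases "C j = 2 - R i")
      case True
      then show ?thesis using E_entry[OF i' j] by (simp add: algebra_simps)
    next
      case False
      then show ?thesis using supp i j by simp
    qed
  qed
  then show ?thesis by (simp add: sum_distrib_left)
qed

lemma F3c:
  assumes supp: "\<forall>i<NR. \<forall>j<MC. C j \<noteq> 2 - R i \<longrightarrow> F i j = 0" and j: "j < MC" and j': "j' < MC"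
  shows "(\<Sum>i<NR. F i j * EE$$(i,j')) = ec j' * sf (2 - C j) (C j') * (\<Sum>i<NR. er i * F i j)"
proof -
  have "(\<Sum>i<NR. F i j * EE$$(i,j')) = (\<Sum>i<NR. ec j' * sf (2 - C j) (C j') * (er i * F i j))"
  proof (rule sum.cong[OF refl])
    fix i assume "i \<in> {..<NR}"
    then have i: "i < NR" by simp
    show "F i j * EE$$(i,j') = ec j' * sf (2 - C j) (C j') * (er i * F i j)"
    proof (cases "C j = 2 - R i")
      case True
      then have "R i = 2 - C j" using R_lt[OF i] C_lt[OF j] by auto
      then show ?thesis using E_entry[OF i j'] by (simp add: algebra_simps)
    next
      case False
      then show ?thesis using supp i j by simp
    qed
  qed
  then show ?thesis by (simp add: sum_distrib_left)
qed

end


lemma sf_props: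
  assumes "x < 3" "y < 3"
  shows "(sf x y = 0 \<longleftrightarrow> y = 2 - x) \<and> (y \<noteq> 2 - x \<longrightarrow> sf x y = 1 \<or> sf x y = -1)"
proof -
  have "x = 0 \<or> x = 1 \<or> x = 2" "y = 0 \<or> y = 1 \<or> y = 2" using assms by arith+
  then show ?thesis by (elim disjE) (simp_all add: sf_def)
qed

lemma eta_sq: "eta x * eta x = 1" by (simp add: eta_def)
lemma eta_sym: "x < 3 \<Longrightarrow> eta (2 - x) = eta x"
proof -
  assume "x < 3"
  then have "x = 0 \<or> x = 1 \<or> x = 2" by arith
  then show ?thesis by (elim disjE) (simp_all add: eta_def)
qed

lemma even_sum_odd: "even ((x::int) + int n) \<Longrightarrow> (odd x \<longleftrightarrow> odd n)"
  by (metis even_add even_of_nat)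

lemma pm_prod: "(u::int) = 1 \<or> u = -1 \<Longrightarrow> v = 1 \<or> v = -1 \<Longrightarrow> u * v \<in> {-1,1}"
  by auto

lemma odd_pm: "(u::int) = 1 \<or> u = -1 \<Longrightarrow> odd (u * z) \<longleftrightarrow> odd z"
  by auto

lemma final_arith:
  fixes x1 x2 x3 y1 y2 y3 :: nat and g g' :: int
  assumes pos: "x1 > 0" "x2 > 0" "x3 > 0" "y1 > 0" "y2 > 0" "y3 > 0"
    and o1: "odd g \<longleftrightarrow> odd x3" and o2: "odd g \<longleftrightarrow> odd x2" and o3: "odd g \<longleftrightarrow> odd x1"
    and o4: "odd g' \<longleftrightarrow> odd y1" and o5: "odd g' \<longleftrightarrow> odd y2" and o6: "odd g' \<longleftrightarrow> odd y3"
    and e1: "int y1 * g = int x3 * g'" and e2: "int y2 * g = int x2 * g'" and e3: "int y3 * g = int x1 * g'"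
  shows "(even x1 \<and> even x2 \<and> even x3 \<and> even y1 \<and> even y2 \<and> even y3)
     \<or> (((odd x1 \<and> odd x2 \<and> odd x3) \<or> (odd y1 \<and> odd y2 \<and> odd y3)) \<and>
        of_nat x3 / of_nat y1 = (of_nat x2 / of_nat y2 :: rat) \<and>
        of_nat x2 / of_nat y2 = (of_nat x1 / of_nat y3 :: rat))"
proof (cases "even g \<and> even g'")
  case True
  then show ?thesis using o1 o2 o3 o4 o5 o6 by auto
next
  case False
  have gne: "g \<noteq> 0 \<and> g' \<noteq> 0"
  proof (cases "odd g")
    case True
    then have "g \<noteq> 0" by auto
    then have "int y1 * g \<noteq> 0" using pos by simp
    then have "g' \<noteq> 0" using e1 by auto
    then show ?thesis using \<open>g \<noteq> 0\<close> by simp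
  next
    case False2: False
    then have "odd g'" using False by auto
    then have "g' \<noteq> 0" by auto
    then have "int x3 * g' \<noteq> 0" using pos by simp
    then have "g \<noteq> 0" using e1 by auto
    then show ?thesis using \<open>g' \<noteq> 0\<close> by simp
  qed
  have r: "of_nat x / of_nat y = (of_int g / of_int g' :: rat)"
    if "int y * g = int x * g'" "y > 0" for x y :: nat
  proof -
    have "rat_of_int (int y * g) = rat_of_int (int x * g')" using that(1) by simp
    then have "of_nat y * of_int g = (of_nat x * of_int g' :: rat)" by simp
    then show ?thesis using that(2) gne by (simp add: field_simps)
  qed
  have "of_nat x3 / of_nat y1 = (of_int g / of_int g' :: rat)" using r e1 pos by simp
  moreover have "of_nat x2 / of_nat y2 = (of_int g / of_int g' :: rat)" using r e2 pos by simp
  moreover have "of_nat x1 / of_nat y3 = (of_int g / of_int g' :: rat)" using r e3 pos by simp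
  moreover have "(odd x1 \<and> odd x2 \<and> odd x3) \<or> (odd y1 \<and> odd y2 \<and> odd y3)"
    using False o1 o2 o3 o4 o5 o6 by auto
  ultimately show ?thesis by simp
qed

context blk6
begin

lemma dc:
  assumes supp: "\<forall>i<NR. \<forall>j<MC. C j \<noteq> 2 - R i \<longrightarrow> F i j = 0" and x: "x < 3"
  shows "(\<Sum>i<NR. if R i = x then er i * (\<Sum>j<MC. ec j * F i j) else 0)
       = (\<Sum>j<MC. if C j = 2 - x then ec j * (\<Sum>i<NR. er i * F i j) else 0)"
proof -
  have "(\<Sum>i<NR. if R i = x then er i * (\<Sum>j<MC. ec j * F i j) else 0)
      = (\<Sum>i<NR. \<Sum>j<MC. if R i = x then er i * (ec j * F i j) else 0)"
    by (intro sum.cong refl) (simp add: sum_distrib_left)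
  also have "\<dots> = (\<Sum>i<NR. \<Sum>j<MC. if C j = 2 - x then ec j * (er i * F i j) else 0)"
  proof (intro sum.cong refl)
    fix i j assume i: "i \<in> {..<NR}" and j: "j \<in> {..<MC}"
    show "(if R i = x then er i * (ec j * F i j) else 0) = (if C j = 2 - x then ec j * (er i * F i j) else 0)"
    proof (cases "C j = 2 - R i")
      case True
      have "R i < 3" "C j < 3" using R_lt C_lt i j by auto
      then have "R i = x \<longleftrightarrow> C j = 2 - x" using True x by auto
      then show ?thesis by (simp add: algebra_simps)
    next
      case False
      then show ?thesis using supp i j by simp
    qed
  qed
  also have "\<dots> = (\<Sum>j<MC. \<Sum>i<NR. if C j = 2 - x then ec j * (er i * F i j) else 0)"
    by (rule sum.swap)
  also have "\<dots> = (\<Sum>j<MC. if C j = 2 - x then ec j * (\<Sum>i<NR. er i * F i j) else 0)"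
    by (intro sum.cong refl) (simp add: sum_distrib_left)
  finally show ?thesis .
qed

lemma nec_core:
  assumes "realizable EE"
  shows "\<exists>g g' :: int. (odd g \<longleftrightarrow> odd (e+f)) \<and> (odd g \<longleftrightarrow> odd (c+d)) \<and> (odd g \<longleftrightarrow> odd (a+b))
     \<and> (odd g' \<longleftrightarrow> odd (k+l)) \<and> (odd g' \<longleftrightarrow> odd (p+q)) \<and> (odd g' \<longleftrightarrow> odd (r+s))
     \<and> int (k+l) * g = int (e+f) * g' \<and> int (p+q) * g = int (c+d) * g' \<and> int (r+s) * g = int (a+b) * g'"
proof -
  from assms obtain A where A: "A \<in> carrier_mat NR MC" and gm: "gram_mates A (A + EE)"
    unfolding realizable_def using EEc by auto
  have AE: "A + EE \<in> carrier_mat NR MC" using A EEc by simp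
  have zA: "A$$(i,j) \<in> {0,1}" if "i < NR" "j < MC" for i j
    using gm A that unfolding gram_mates_def zero_one_mat_def by auto
  have zB: "A$$(i,j) + EE$$(i,j) \<in> {0,1}" if "i < NR" "j < MC" for i j
  proof -
    have z: "zero_one_mat (A + EE)" using gm unfolding gram_mates_def by blast
    have d: "dim_row (A+EE) = NR" "dim_col (A+EE) = MC" using AE by auto
    have "(A + EE)$$(i,j) \<in> {0,1}" using z[unfolded zero_one_mat_def d] that by blast
    then show ?thesis using that EEc by simp
  qed
  have g1: "A * transpose_mat A = (A + EE) * transpose_mat (A + EE)"
    and g2: "transpose_mat A * A = transpose_mat (A + EE) * (A + EE)"
    using gm unfolding gram_mates_def by auto
  define F where "F i j = 2 * A$$(i,j) - 1 + EE$$(i,j)" for i j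
  have AF: "\<forall>i<NR. \<forall>j<MC. 2*A$$(i,j) = 1 + F i j - EE$$(i,j)" by (simp add: F_def)
  have Fv: "(C j = 2 - R i \<longrightarrow> F i j = 1 \<or> F i j = -1) \<and> (C j \<noteq> 2 - R i \<longrightarrow> F i j = 0)"
    if i: "i < NR" and j: "j < MC" for i j
  proof -
    have E: "EE$$(i,j) = er i * ec j * sf (R i) (C j)" by (rule E_entry[OF i j])
    have sp: "(sf (R i) (C j) = 0 \<longleftrightarrow> C j = 2 - R i) \<and> (C j \<noteq> 2 - R i \<longrightarrow> sf (R i) (C j) = 1 \<or> sf (R i) (C j) = -1)"
      by (rule sf_props[OF R_lt[OF i] C_lt[OF j]])
    show ?thesis
    proof (intro conjI impI)
      assume h: "C j = 2 - R i"
      then have "EE$$(i,j) = 0" using E sp by simp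
      then show "F i j = 1 \<or> F i j = -1" using zA[OF i j] by (auto simp: F_def)
    next
      assume h: "C j \<noteq> 2 - R i"
      then have "EE$$(i,j) = 1 \<or> EE$$(i,j) = -1" using E sp er_pm[of i] ec_pm[of j] by auto
      then show "F i j = 0" using zA[OF i j] zB[OF i j] by (auto simp: F_def)
    qed
  qed
  have supp: "\<forall>i<NR. \<forall>j<MC. C j \<noteq> 2 - R i \<longrightarrow> F i j = 0" using Fv by blast
  have rsum: "\<forall>i<NR. (\<Sum>j<MC. EE$$(i,j)) = 0" using rowsum by blast
  have csum: "\<forall>j<MC. (\<Sum>i<NR. EE$$(i,j)) = 0" using colsum by blast
  have rows: "\<forall>i<NR. \<forall>i'<NR. (\<Sum>j<MC. F i j * EE$$(i',j) + EE$$(i,j) * F i' j) = 0"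
    using gram_rows[OF A EEc AF rsum] g1 by blast
  have cols: "\<forall>j<MC. \<forall>j'<MC. (\<Sum>i<NR. F i j * EE$$(i,j') + EE$$(i,j) * F i j') = 0"
    using gram_cols[OF A EEc AF csum] g2 by blast
  define ph where "ph i = (\<Sum>j<MC. ec j * F i j)" for i
  define ps where "ps j = (\<Sum>i<NR. er i * F i j)" for j
  define Ph where "Ph i = er i * eta (R i) * ph i" for i
  define Ps where "Ps j = ec j * eta (C j) * ps j" for j
  have PhEq: "Ph i = Ph i'" if h: "i < NR" "i' < NR" "R i \<noteq> R i'" for i i'
  proof -
    have "(\<Sum>j<MC. F i j * EE$$(i',j) + EE$$(i,j) * F i' j) = 0" using rows h by blast
    moreover have "(\<Sum>j<MC. EE$$(i,j) * F i' j) = (\<Sum>j<MC. F i' j * EE$$(i,j))" by (simp add: mult.commute)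
    ultimately have "(\<Sum>j<MC. F i j * EE$$(i',j)) + (\<Sum>j<MC. F i' j * EE$$(i,j)) = 0"
      by (simp add: sum.distrib)
    then have "er i' * sf (R i') (2 - R i) * ph i + er i * sf (R i) (2 - R i') * ph i' = 0"
      using F3[OF supp h(1) h(2)] F3[OF supp h(2) h(1)] by (simp add: ph_def)
    then show ?thesis unfolding Ph_def
      using pairR[OF R_lt[OF h(1)] R_lt[OF h(2)] h(3) er_pm er_pm] by blast
  qed
  have PsEq: "Ps j = Ps j'" if h: "j < MC" "j' < MC" "C j \<noteq> C j'" for j j'
  proof -
    have "(\<Sum>i<NR. F i j * EE$$(i,j') + EE$$(i,j) * F i j') = 0" using cols h by blast
    moreover have "(\<Sum>i<NR. EE$$(i,j) * F i j') = (\<Sum>i<NR. F i j' * EE$$(i,j))" by (simp add: mult.commute)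
    ultimately have "(\<Sum>i<NR. F i j * EE$$(i,j')) + (\<Sum>i<NR. F i j' * EE$$(i,j)) = 0"
      by (simp add: sum.distrib)
    then have "ec j' * sf (2 - C j) (C j') * ps j + ec j * sf (2 - C j') (C j) * ps j' = 0"
      using F3c[OF supp h(1) h(2)] F3c[OF supp h(2) h(1)] by (simp add: ps_def)
    then show ?thesis unfolding Ps_def
      using pairC[OF C_lt[OF h(1)] C_lt[OF h(2)] h(3) ec_pm ec_pm] by blast
  qed
  have i0: "0 < NR" "R 0 = 0" using pos by (auto simp: R_val)
  have i1: "k+l < NR" "R (k+l) = 1" using pos by (auto simp: R_val)
  have i2: "k+l+p+q < NR" "R (k+l+p+q) = 2" using pos by (auto simp: R_val)
  have j0: "0 < MC" "C 0 = 0" using pos by (auto simp: C_val)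
  have j1: "a+b < MC" "C (a+b) = 1" using pos by (auto simp: C_val)
  have j2: "a+b+c+d < MC" "C (a+b+c+d) = 2" using pos by (auto simp: C_val)
  define g where "g = Ph 0"
  define g' where "g' = Ps 0"
  have Ph_all: "Ph i = g" if i: "i < NR" for i
  proof (cases "R i = 0")
    case True
    then have "Ph i = Ph (k+l)" using PhEq[OF i i1(1)] i1 by simp
    also have "\<dots> = Ph 0" using PhEq[OF i1(1) i0(1)] i1 i0 by simp
    finally show ?thesis by (simp add: g_def)
  next
    case False
    then show ?thesis using PhEq[OF i i0(1)] i0 by (simp add: g_def)
  qed
  have Ps_all: "Ps j = g'" if j: "j < MC" for j
  proof (cases "C j = 0")
    case True
    then have "Ps j = Ps (a+b)" using PsEq[OF j j1(1)] j1 by simp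
    also have "\<dots> = Ps 0" using PsEq[OF j1(1) j0(1)] j1 j0 by simp
    finally show ?thesis by (simp add: g'_def)
  next
    case False
    then show ?thesis using PsEq[OF j j0(1)] j0 by (simp add: g'_def)
  qed
  have par_ph: "odd (ph i) \<longleftrightarrow> odd (cC (2 - R i))" if i: "i < NR" for i
  proof -
    have "even (ph i + int (card {j. j < MC \<and> C j = 2 - R i}))"
      unfolding ph_def
    proof (rule parity_sum, intro allI impI)
      fix j assume j: "j < MC"
      show "(C j = 2 - R i \<longrightarrow> ec j * F i j \<in> {-1, 1}) \<and> (C j \<noteq> 2 - R i \<longrightarrow> ec j * F i j = 0)"
      proof (intro conjI impI)
        assume "C j = 2 - R i"
        then have "F i j = 1 \<or> F i j = -1" using Fv[OF i j] by blast
        then show "ec j * F i j \<in> {-1, 1}" using pm_prod[OF ec_pm[of j]] by blast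
      next
        assume "C j \<noteq> 2 - R i"
        then have "F i j = 0" using Fv[OF i j] by blast
        then show "ec j * F i j = 0" by simp
      qed
    qed
    moreover have "card {j. j < MC \<and> C j = 2 - R i} = cC (2 - R i)" by (rule cardC) simp
    ultimately have "even (ph i + int (cC (2 - R i)))" by simp
    then show ?thesis by (rule even_sum_odd)
  qed
  have par_ps: "odd (ps j) \<longleftrightarrow> odd (cR (2 - C j))" if j: "j < MC" for j
  proof -
    have "even (ps j + int (card {i. i < NR \<and> R i = 2 - C j}))"
      unfolding ps_def
    proof (rule parity_sum, intro allI impI)
      fix i assume i: "i < NR"
      have eq: "R i = 2 - C j \<longleftrightarrow> C j = 2 - R i" using R_lt[OF i] C_lt[OF j] by auto
      show "(R i = 2 - C j \<longrightarrow> er i * F i j \<in> {-1, 1}) \<and> (R i \<noteq> 2 - C j \<longrightarrow> er i * F i j = 0)"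
      proof (intro conjI impI)
        assume "R i = 2 - C j"
        then have "F i j = 1 \<or> F i j = -1" using Fv[OF i j] eq by blast
        then show "er i * F i j \<in> {-1, 1}" using pm_prod[OF er_pm[of i]] by blast
      next
        assume "R i \<noteq> 2 - C j"
        then have "F i j = 0" using Fv[OF i j] eq by blast
        then show "er i * F i j = 0" by simp
      qed
    qed
    moreover have "card {i. i < NR \<and> R i = 2 - C j} = cR (2 - C j)" by (rule cardR) simp
    ultimately have "even (ps j + int (cR (2 - C j)))" by simp
    then show ?thesis by (rule even_sum_odd)
  qed
  have oPh: "odd (Ph i) \<longleftrightarrow> odd (ph i)" for i
  proof -
    have "er i * eta (R i) = 1 \<or> er i * eta (R i) = -1" using er_pm[of i] by (auto simp: eta_def)
    then show ?thesis unfolding Ph_def using odd_pm by blast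
  qed
  have oPs: "odd (Ps j) \<longleftrightarrow> odd (ps j)" for j
  proof -
    have "ec j * eta (C j) = 1 \<or> ec j * eta (C j) = -1" using ec_pm[of j] by (auto simp: eta_def)
    then show ?thesis unfolding Ps_def using odd_pm by blast
  qed
  have og1: "odd g \<longleftrightarrow> odd (e+f)" using par_ph[OF i0(1)] oPh[of 0] i0 by (simp add: g_def cC_def)
  have og2: "odd g \<longleftrightarrow> odd (c+d)" using par_ph[OF i1(1)] oPh[of "k+l"] i1 Ph_all[OF i1(1)] by (simp add: cC_def)
  have og3: "odd g \<longleftrightarrow> odd (a+b)" using par_ph[OF i2(1)] oPh[of "k+l+p+q"] i2 Ph_all[OF i2(1)] by (simp add: cC_def)
  have og4: "odd g' \<longleftrightarrow> odd (r+s)" using par_ps[OF j0(1)] oPs[of 0] j0 by (simp add: g'_def cR_def)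
  have og5: "odd g' \<longleftrightarrow> odd (p+q)" using par_ps[OF j1(1)] oPs[of "a+b"] j1 Ps_all[OF j1(1)] by (simp add: cR_def)
  have og6: "odd g' \<longleftrightarrow> odd (k+l)" using par_ps[OF j2(1)] oPs[of "a+b+c+d"] j2 Ps_all[OF j2(1)] by (simp add: cR_def)
  have dcx: "int (cR x) * g = int (cC (2 - x)) * g'" if x: "x < 3" for x
  proof -
    have L: "(\<Sum>i<NR. if R i = x then er i * ph i else 0) = int (cR x) * (eta x * g)"
    proof -
      have "(\<Sum>i<NR. if R i = x then er i * ph i else 0) = (\<Sum>i<NR. if R i = x then eta x * g else 0)"
      proof (intro sum.cong refl)
        fix i assume "i \<in> {..<NR}"
        then have i: "i < NR" by simp
        have "er i * ph i = eta (R i) * Ph i"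
          unfolding Ph_def using eta_sq[of "R i"] by (simp add: algebra_simps)
        then show "(if R i = x then er i * ph i else 0) = (if R i = x then eta x * g else 0)"
          using Ph_all[OF i] by simp
      qed
      also have "\<dots> = int (card {i. i < NR \<and> R i = x}) * (eta x * g)" by (rule sum_if_const)
      finally show ?thesis using cardR[OF x] by simp
    qed
    have Rt: "(\<Sum>j<MC. if C j = 2 - x then ec j * ps j else 0) = int (cC (2 - x)) * (eta (2 - x) * g')"
    proof -
      have "(\<Sum>j<MC. if C j = 2 - x then ec j * ps j else 0) = (\<Sum>j<MC. if C j = 2 - x then eta (2 - x) * g' else 0)"
      proof (intro sum.cong refl)
        fix j assume "j \<in> {..<MC}"
        then have j: "j < MC" by simp
        have "ec j * ps j = eta (C j) * Ps j"
          unfolding Ps_def using eta_sq[of "C j"] by (simp add: algebra_simps)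
        then show "(if C j = 2 - x then ec j * ps j else 0) = (if C j = 2 - x then eta (2 - x) * g' else 0)"
          using Ps_all[OF j] by simp
      qed
      also have "\<dots> = int (card {j. j < MC \<and> C j = 2 - x}) * (eta (2 - x) * g')" by (rule sum_if_const)
      finally show ?thesis using cardC[of "2 - x"] by simp
    qed
    have "int (cR x) * (eta x * g) = int (cC (2 - x)) * (eta (2 - x) * g')"
      using dc[OF supp x] L Rt unfolding ph_def ps_def by simp
    then have "eta x * (int (cR x) * g) = eta x * (int (cC (2 - x)) * g')"
      using eta_sym[OF x] by (simp add: algebra_simps)
    moreover have "eta x \<noteq> 0" by (simp add: eta_def)
    ultimately show ?thesis by simp
  qed
  have "int (k+l) * g = int (e+f) * g'" using dcx[of 0] by (simp add: cR_def cC_def)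
  moreover have "int (p+q) * g = int (c+d) * g'" using dcx[of 1] by (simp add: cR_def cC_def)
  moreover have "int (r+s) * g = int (a+b) * g'" using dcx[of 2] by (simp add: cR_def cC_def)
  ultimately show ?thesis using og1 og2 og3 og4 og5 og6 by blast
qed

end

lemma ratio_nat:
  fixes x y x' y' :: nat
  assumes "y > 0" "y' > 0" "of_nat x / of_nat y = (of_nat x' / of_nat y' :: rat)"
  shows "x * y' = x' * y"
proof -
  have "rat_of_nat x * rat_of_nat y' = rat_of_nat x' * rat_of_nat y"
    using assms by (simp add: field_simps)
  then have "rat_of_nat (x * y') = rat_of_nat (x' * y)" by simp
  then show ?thesis by (simp only: of_nat_eq_iff)
qed

lemma split_ratio:
  fixes X Y x y :: nat
  assumes cop: "coprime X Y" and X: "X > 0" and eq: "X * y = x * Y"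
  shows "\<exists>N. x = X * N \<and> y = Y * N"
proof -
  have "X dvd x * Y" using eq by (metis dvd_triv_left)
  then have "X dvd x" using coprime_dvd_mult_left_iff[OF cop] by simp
  then obtain N where N: "x = X * N" by (auto elim: dvdE)
  then have "X * y = X * (N * Y)" using eq by (simp add: ac_simps)
  then have "y = N * Y" using X by simp
  then show ?thesis using N by (auto simp: ac_simps)
qed

lemma odd_half: "odd (g::nat) \<Longrightarrow> 2 * int ((g + 1) div 2) - int g = 1"
proof -
  assume "odd g"
  then obtain t where "g = 2 * t + 1" by (metis oddE)
  then show ?thesis by simp
qed

lemma params:
  fixes x1 x2 x3 y1 y2 y3 :: nat
  assumes pos: "x1 > 0" "x2 > 0" "x3 > 0" "y1 > 0" "y2 > 0" "y3 > 0"
    and cond: "(even x1 \<and> even x2 \<and> even x3 \<and> even y1 \<and> even y2 \<and> even y3)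
     \<or> (((odd x1 \<and> odd x2 \<and> odd x3) \<or> (odd y1 \<and> odd y2 \<and> odd y3)) \<and>
        of_nat x3 / of_nat y1 = (of_nat x2 / of_nat y2 :: rat) \<and>
        of_nat x2 / of_nat y2 = (of_nat x1 / of_nat y3 :: rat))"
  shows "\<exists>g h qc qr :: nat \<Rightarrow> nat. \<exists>ga ga' :: int.
     (\<forall>x<3. 0 < g x \<and> h x \<le> g x \<and> int (qc x) * (2 * int (h x) - int (g x)) = ga
                \<and> int (qr x) * (2 * int (h x) - int (g x)) = ga')
     \<and> x3 = g 0 * qc 0 \<and> y1 = g 0 * qr 0 \<and> x2 = g 1 * qc 1 \<and> y2 = g 1 * qr 1
     \<and> x1 = g 2 * qc 2 \<and> y3 = g 2 * qr 2"
  using cond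
proof
  assume ev: "even x1 \<and> even x2 \<and> even x3 \<and> even y1 \<and> even y2 \<and> even y3"
  define g :: "nat \<Rightarrow> nat" where "g = (\<lambda>_. 2)"
  define h :: "nat \<Rightarrow> nat" where "h = (\<lambda>_. 1)"
  define qc :: "nat \<Rightarrow> nat" where "qc = (\<lambda>x. if x = 0 then x3 div 2 else if x = 1 then x2 div 2 else x1 div 2)"
  define qr :: "nat \<Rightarrow> nat" where "qr = (\<lambda>x. if x = 0 then y1 div 2 else if x = 1 then y2 div 2 else y3 div 2)"
  have P: "\<forall>x<3. 0 < g x \<and> h x \<le> g x \<and> int (qc x) * (2 * int (h x) - int (g x)) = 0
                \<and> int (qr x) * (2 * int (h x) - int (g x)) = 0" by (simp add: g_def h_def)
  have Q: "x3 = g 0 * qc 0 \<and> y1 = g 0 * qr 0 \<and> x2 = g 1 * qc 1 \<and> y2 = g 1 * qr 1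
     \<and> x1 = g 2 * qc 2 \<and> y3 = g 2 * qr 2" using ev by (simp add: g_def qc_def qr_def)
  show ?thesis using P Q by blast
next
  assume h: "((odd x1 \<and> odd x2 \<and> odd x3) \<or> (odd y1 \<and> odd y2 \<and> odd y3)) \<and>
        of_nat x3 / of_nat y1 = (of_nat x2 / of_nat y2 :: rat) \<and>
        of_nat x2 / of_nat y2 = (of_nat x1 / of_nat y3 :: rat)"
  define G where "G = gcd x3 y1"
  define X where "X = x3 div G"
  define Y where "Y = y1 div G"
  have G0: "G > 0" using pos by (simp add: G_def)
  have x3G: "x3 = G * X" by (simp add: G_def X_def)
  have y1G: "y1 = G * Y" by (simp add: G_def Y_def)
  have cop: "coprime X Y" unfolding X_def Y_def G_def by (rule div_gcd_coprime) (use pos in auto)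
  have X0: "X > 0" using x3G pos by (cases X) auto
  have e12: "x3 * y2 = x2 * y1" using ratio_nat[of y1 y2 x3 x2] h pos by simp
  have e13: "x3 * y3 = x1 * y1"
  proof -
    have "of_nat x3 / of_nat y1 = (of_nat x1 / of_nat y3 :: rat)" using h by simp
    then show ?thesis using ratio_nat[of y1 y3 x3 x1] pos by simp
  qed
  have "G * (X * y2) = G * (x2 * Y)" using e12 x3G y1G by (simp add: ac_simps)
  then have "X * y2 = x2 * Y" using G0 by simp
  then obtain N1 where N1: "x2 = X * N1" "y2 = Y * N1" using split_ratio[OF cop X0] by blast
  have "G * (X * y3) = G * (x1 * Y)" using e13 x3G y1G by (simp add: ac_simps)
  then have "X * y3 = x1 * Y" using G0 by simp
  then obtain N2 where N2: "x1 = X * N2" "y3 = Y * N2" using split_ratio[OF cop X0] by blast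
  have odds: "odd G \<and> odd N1 \<and> odd N2"
    using h x3G y1G N1 N2 by auto
  define g :: "nat \<Rightarrow> nat" where "g = (\<lambda>x. if x = 0 then G else if x = 1 then N1 else N2)"
  define hh :: "nat \<Rightarrow> nat" where "hh = (\<lambda>x. (g x + 1) div 2)"
  have gx: "odd (g x)" for x using odds by (simp add: g_def)
  have P: "\<forall>x<3. 0 < g x \<and> hh x \<le> g x \<and> int X * (2 * int (hh x) - int (g x)) = int X
                \<and> int Y * (2 * int (hh x) - int (g x)) = int Y"
  proof (intro allI impI)
    fix x :: nat assume "x < 3"
    have o: "odd (g x)" by (rule gx)
    have p1: "0 < g x" using o by (cases "g x") auto
    have p2: "hh x \<le> g x" using p1 by (simp add: hh_def)
    have p3: "2 * int (hh x) - int (g x) = 1" unfolding hh_def by (rule odd_half[OF o])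
    show "0 < g x \<and> hh x \<le> g x \<and> int X * (2 * int (hh x) - int (g x)) = int X
                \<and> int Y * (2 * int (hh x) - int (g x)) = int Y"
      unfolding p3 using p1 p2 by simp
  qed
  have Q: "x3 = g 0 * (\<lambda>_. X) 0 \<and> y1 = g 0 * (\<lambda>_. Y) 0 \<and> x2 = g 1 * (\<lambda>_. X) 1 \<and> y2 = g 1 * (\<lambda>_. Y) 1
     \<and> x1 = g 2 * (\<lambda>_. X) 2 \<and> y3 = g 2 * (\<lambda>_. Y) 2" using x3G y1G N1 N2 by (simp add: g_def ac_simps)
  show ?thesis
    apply (rule exI[of _ g], rule exI[of _ hh], rule exI[of _ "\<lambda>_. X"], rule exI[of _ "\<lambda>_. Y"])
    apply (rule exI[of _ "int X"], rule exI[of _ "int Y"])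
    using P Q by simp
qed

lemma pm4: "(u::int) = 1 \<or> u = -1 \<Longrightarrow> v = 1 \<or> v = -1 \<Longrightarrow> w = 1 \<or> w = -1 \<Longrightarrow> z = 1 \<or> z = -1
   \<Longrightarrow> u * v * w * z = 1 \<or> u * v * w * z = -1"
  by auto

lemma eta_pm: "eta x = 1 \<or> eta x = -1" by (simp add: eta_def)

lemma Wsum:
  assumes "0 < gg" "hh \<le> gg" "L = gg * q"
  shows "(\<Sum>v<L. (if (u + v) mod gg < hh then 1 else -1 :: int)) = int q * (2 * int hh - int gg)"
proof -
  have "(\<Sum>v<L. (if (u + v) mod gg < hh then 1 else -1 :: int)) = int q * (\<Sum>z<gg. (if z < hh then 1 else -1 :: int))"
    unfolding assms(3) by (rule modsum[OF assms(1)])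
  also have "\<dots> = int q * (2 * int hh - int gg)" using sum_pm[OF assms(2)] by simp
  finally show ?thesis .
qed

context blk6
begin

lemma suff_core:
  assumes gp: "\<forall>x<3. 0 < gg x \<and> hh x \<le> gg x \<and> int (qc x) * (2 * int (hh x) - int (gg x)) = ga
                \<and> int (qr x) * (2 * int (hh x) - int (gg x)) = ga'"
    and dC: "\<forall>x<3. cC (2 - x) = gg x * qc x" and dR: "\<forall>x<3. cR x = gg x * qr x"
  shows "realizable EE"
proof -
  define W where "W x u v = (if (u + v) mod gg x < hh x then 1 else -1 :: int)" for x u v
  define F where "F i j = (if C j = 2 - R i then er i * eta (R i) * ec j * W (R i) (i - ro (R i)) (j - co (C j)) else 0)" for i j
  have Wpm: "W x u v = 1 \<or> W x u v = -1" for x u v by (simp add: W_def)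
  have Fv: "(C j = 2 - R i \<longrightarrow> F i j = 1 \<or> F i j = -1) \<and> (C j \<noteq> 2 - R i \<longrightarrow> F i j = 0)" for i j
    unfolding F_def using pm4[OF er_pm eta_pm ec_pm Wpm] by simp
  have supp: "\<forall>i<NR. \<forall>j<MC. C j \<noteq> 2 - R i \<longrightarrow> F i j = 0" using Fv by blast
  have Ev: "(C j = 2 - R i \<longrightarrow> EE$$(i,j) = 0) \<and> (C j \<noteq> 2 - R i \<longrightarrow> EE$$(i,j) = 1 \<or> EE$$(i,j) = -1)"
    if i: "i < NR" and j: "j < MC" for i j
  proof -
    have E: "EE$$(i,j) = er i * ec j * sf (R i) (C j)" by (rule E_entry[OF i j])
    have sp: "(sf (R i) (C j) = 0 \<longleftrightarrow> C j = 2 - R i) \<and> (C j \<noteq> 2 - R i \<longrightarrow> sf (R i) (C j) = 1 \<or> sf (R i) (C j) = -1)"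
      by (rule sf_props[OF R_lt[OF i] C_lt[OF j]])
    show ?thesis
    proof (intro conjI impI)
      assume "C j = 2 - R i" then show "EE$$(i,j) = 0" using E sp by simp
    next
      assume "C j \<noteq> 2 - R i" then show "EE$$(i,j) = 1 \<or> EE$$(i,j) = -1"
        using E sp er_pm[of i] ec_pm[of j] by auto
    qed
  qed
  have par: "even (1 + F i j - EE$$(i,j)) \<and> (1 + F i j - EE$$(i,j)) \<in> {0,2} \<and> (1 + F i j + EE$$(i,j)) \<in> {0,2}"
    if i: "i < NR" and j: "j < MC" for i j
  proof (cases "C j = 2 - R i")
    case True
    then have "EE$$(i,j) = 0" "F i j = 1 \<or> F i j = -1" using Ev[OF i j] Fv[of j i] by auto
    then show ?thesis by auto
  next
    case False
    then have "F i j = 0" "EE$$(i,j) = 1 \<or> EE$$(i,j) = -1" using Ev[OF i j] Fv[of j i] by auto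
    then show ?thesis by auto
  qed
  define A where "A = mat NR MC (\<lambda>(i,j). (1 + F i j - EE$$(i,j)) div 2)"
  have Ac: "A \<in> carrier_mat NR MC" by (simp add: A_def)
  have AF: "\<forall>i<NR. \<forall>j<MC. 2*A$$(i,j) = 1 + F i j - EE$$(i,j)"
  proof (intro allI impI)
    fix i j assume i: "i < NR" and j: "j < MC"
    have "A$$(i,j) = (1 + F i j - EE$$(i,j)) div 2" using i j by (simp add: A_def)
    then show "2*A$$(i,j) = 1 + F i j - EE$$(i,j)" using par[OF i j] by simp
  qed
  have zA: "zero_one_mat A"
    unfolding zero_one_mat_def
  proof (intro allI impI)
    fix i j assume "i < dim_row A" "j < dim_col A"
    then have i: "i < NR" and j: "j < MC" using Ac by auto
    have "2*A$$(i,j) = 1 + F i j - EE$$(i,j)" using AF i j by blast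
    then have "2*A$$(i,j) \<in> {0,2}" using par[OF i j] by simp
    then show "A$$(i,j) \<in> {0,1}" by auto
  qed
  have zB: "zero_one_mat (A + EE)"
    unfolding zero_one_mat_def
  proof (intro allI impI)
    fix i j assume "i < dim_row (A + EE)" "j < dim_col (A + EE)"
    then have i: "i < NR" and j: "j < MC" using Ac EEc by auto
    have "(A + EE)$$(i,j) = A$$(i,j) + EE$$(i,j)" using i j EEc by simp
    moreover have "2*(A$$(i,j) + EE$$(i,j)) \<in> {0,2}"
    proof -
      have "2*A$$(i,j) = 1 + F i j - EE$$(i,j)" using AF i j by blast
      then have eq: "2*(A$$(i,j) + EE$$(i,j)) = 1 + F i j + EE$$(i,j)" by simp
      show ?thesis unfolding eq using par[OF i j] by blast
    qed
    ultimately show "(A + EE)$$(i,j) \<in> {0,1}" by auto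
  qed
  have phi: "(\<Sum>j<MC. ec j * F i j) = er i * eta (R i) * ga" if i: "i < NR" for i
  proof -
    define x where "x = R i"
    define cc where "cc = 2 - x"
    define u where "u = i - ro x"
    have x3: "x < 3" using R_lt[OF i] by (simp add: x_def)
    have cc3: "cc < 3" by (simp add: cc_def)
    have "(\<Sum>j<MC. ec j * F i j) = (\<Sum>j<MC. if co cc \<le> j \<and> j < co cc + cC cc then er i * eta x * W x u (j - co cc) else 0)"
    proof (intro sum.cong refl)
      fix j assume "j \<in> {..<MC}"
      then have j: "j < MC" by simp
      have ci: "C j = cc \<longleftrightarrow> co cc \<le> j \<and> j < co cc + cC cc" by (rule C_iff[OF j cc3])
      have ecsq: "ec j * ec j = 1" using ec_pm[of j] by auto
      show "ec j * F i j = (if co cc \<le> j \<and> j < co cc + cC cc then er i * eta x * W x u (j - co cc) else 0)"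
      proof (cases "C j = cc")
        case True
        then have "ec j * F i j = (ec j * ec j) * (er i * eta x * W x u (j - co cc))"
          by (simp add: F_def x_def cc_def u_def algebra_simps)
        then show ?thesis using True ci ecsq by simp
      next
        case False
        then have n: "\<not> (co cc \<le> j \<and> j < co cc + cC cc)" using ci by blast
        have "F i j = 0" using False by (simp add: F_def x_def cc_def)
        then show ?thesis unfolding if_not_P[OF n] by simp
      qed
    qed
    also have "\<dots> = (\<Sum>v<cC cc. er i * eta x * W x u v)"
      by (rule reindex_sum[OF co_le[OF cc3]])
    also have "\<dots> = er i * eta x * (\<Sum>v<cC cc. W x u v)" by (simp add: sum_distrib_left)
    also have "(\<Sum>v<cC cc. W x u v) = ga"
    proof -
      have g: "0 < gg x" "hh x \<le> gg x" "int (qc x) * (2 * int (hh x) - int (gg x)) = ga" using gp x3 by auto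
      have "cC cc = gg x * qc x" using dC x3 by (simp add: cc_def)
      then show ?thesis unfolding W_def using Wsum[OF g(1) g(2)] g(3) by simp
    qed
    finally show ?thesis by (simp add: x_def)
  qed
  have psi: "(\<Sum>i<NR. er i * F i j) = ec j * eta (2 - C j) * ga'" if j: "j < MC" for j
  proof -
    define x where "x = 2 - C j"
    define v where "v = j - co (C j)"
    have x3: "x < 3" by (simp add: x_def)
    have "(\<Sum>i<NR. er i * F i j) = (\<Sum>i<NR. if ro x \<le> i \<and> i < ro x + cR x then eta x * ec j * W x (i - ro x) v else 0)"
    proof (intro sum.cong refl)
      fix i assume "i \<in> {..<NR}"
      then have i: "i < NR" by simp
      have ri: "R i = x \<longleftrightarrow> ro x \<le> i \<and> i < ro x + cR x" by (rule R_iff[OF i x3])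
      have eq: "C j = 2 - R i \<longleftrightarrow> R i = x" using R_lt[OF i] C_lt[OF j] by (auto simp: x_def)
      have ersq: "er i * er i = 1" using er_pm[of i] by auto
      show "er i * F i j = (if ro x \<le> i \<and> i < ro x + cR x then eta x * ec j * W x (i - ro x) v else 0)"
      proof (cases "R i = x")
        case True
        then have "er i * F i j = (er i * er i) * (eta x * ec j * W x (i - ro x) v)"
          using eq by (simp add: F_def v_def algebra_simps)
        then show ?thesis using True ri ersq by simp
      next
        case False
        then have n: "\<not> (ro x \<le> i \<and> i < ro x + cR x)" using ri by blast
        have "F i j = 0" using False eq by (simp add: F_def)
        then show ?thesis unfolding if_not_P[OF n] by simp
      qed
    qed
    also have "\<dots> = (\<Sum>u<cR x. eta x * ec j * W x u v)"
      by (rule reindex_sum[OF ro_le[OF x3]])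
    also have "\<dots> = eta x * ec j * (\<Sum>u<cR x. W x u v)" by (simp add: sum_distrib_left)
    also have "(\<Sum>u<cR x. W x u v) = ga'"
    proof -
      have g: "0 < gg x" "hh x \<le> gg x" "int (qr x) * (2 * int (hh x) - int (gg x)) = ga'" using gp x3 by auto
      have "cR x = gg x * qr x" using dR x3 by simp
      then have "(\<Sum>u<cR x. (if (v + u) mod gg x < hh x then 1 else -1 :: int)) = ga'"
        using Wsum[OF g(1) g(2)] g(3) by simp
      then show ?thesis unfolding W_def by (simp add: add.commute)
    qed
    finally show ?thesis by (simp add: x_def algebra_simps)
  qed
  have rsum: "\<forall>i<NR. (\<Sum>j<MC. EE$$(i,j)) = 0" using rowsum by blast
  have csum: "\<forall>j<MC. (\<Sum>i<NR. EE$$(i,j)) = 0" using colsum by blast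
  have rows: "\<forall>i<NR. \<forall>i'<NR. (\<Sum>j<MC. F i j * EE$$(i',j) + EE$$(i,j) * F i' j) = 0"
  proof (intro allI impI)
    fix i i' assume i: "i < NR" and i': "i' < NR"
    have "(\<Sum>j<MC. EE$$(i,j) * F i' j) = (\<Sum>j<MC. F i' j * EE$$(i,j))" by (simp add: mult.commute)
    then have "(\<Sum>j<MC. F i j * EE$$(i',j) + EE$$(i,j) * F i' j)
       = (\<Sum>j<MC. F i j * EE$$(i',j)) + (\<Sum>j<MC. F i' j * EE$$(i,j))" by (simp add: sum.distrib)
    also have "\<dots> = er i' * sf (R i') (2 - R i) * (er i * eta (R i) * ga) + er i * sf (R i) (2 - R i') * (er i' * eta (R i') * ga)"
      using F3[OF supp i i'] F3[OF supp i' i] phi[OF i] phi[OF i'] by simp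
    also have "\<dots> = 0" by (rule pairR0[OF R_lt[OF i] R_lt[OF i'] er_pm er_pm])
    finally show "(\<Sum>j<MC. F i j * EE$$(i',j) + EE$$(i,j) * F i' j) = 0" .
  qed
  have cols: "\<forall>j<MC. \<forall>j'<MC. (\<Sum>i<NR. F i j * EE$$(i,j') + EE$$(i,j) * F i j') = 0"
  proof (intro allI impI)
    fix j j' assume j: "j < MC" and j': "j' < MC"
    have "(\<Sum>i<NR. EE$$(i,j) * F i j') = (\<Sum>i<NR. F i j' * EE$$(i,j))" by (simp add: mult.commute)
    then have "(\<Sum>i<NR. F i j * EE$$(i,j') + EE$$(i,j) * F i j')
       = (\<Sum>i<NR. F i j * EE$$(i,j')) + (\<Sum>i<NR. F i j' * EE$$(i,j))" by (simp add: sum.distrib)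
    also have "\<dots> = ec j' * sf (2 - C j) (C j') * (ec j * eta (2 - C j) * ga') + ec j * sf (2 - C j') (C j) * (ec j' * eta (2 - C j') * ga')"
      using F3c[OF supp j j'] F3c[OF supp j' j] psi[OF j] psi[OF j'] by simp
    also have "\<dots> = 0" by (rule pairC0[OF C_lt[OF j] C_lt[OF j'] ec_pm ec_pm])
    finally show "(\<Sum>i<NR. F i j * EE$$(i,j') + EE$$(i,j) * F i j') = 0" .
  qed
  have g1: "A * transpose_mat A = (A + EE) * transpose_mat (A + EE)"
    using gram_rows[OF Ac EEc AF rsum] rows by blast
  have g2: "transpose_mat A * A = transpose_mat (A + EE) * (A + EE)"
    using gram_cols[OF Ac EEc AF csum] cols by blast
  have n0: "0 < NR" "0 < MC" using pos by auto
  have E00: "EE$$(0,0) \<noteq> 0"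
  proof -
    have "R 0 = 0" "C 0 = 0" using pos by (auto simp: R_val C_val)
    then have "EE$$(0,0) = er 0 * ec 0" using E_entry[OF n0] by (simp add: sf_def)
    then show ?thesis using er_pm[of 0] ec_pm[of 0] by auto
  qed
  have neq: "A \<noteq> A + EE"
  proof
    assume "A = A + EE"
    then have "A$$(0,0) = (A + EE)$$(0,0)" by simp
    also have "\<dots> = A$$(0,0) + EE$$(0,0)" using n0 EEc by simp
    finally show False using E00 by simp
  qed
  have "gram_mates A (A + EE)"
    unfolding gram_mates_def using zA zB Ac EEc g1 g2 neq by auto
  then show ?thesis unfolding realizable_def using Ac EEc by auto
qed

end

theorem theorem4p35:
  fixes a b c d e f k l p q r s :: nat
  assumes "a + b > 0" "c + d > 0" "e + f > 0" "k + l > 0" "p + q > 0" "r + s > 0"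
    and "E_mat a b c d e f k l p q r s *\<^sub>v vec (a+b+c+d+e+f) (\<lambda>_. 1) = 0\<^sub>v (k+l+p+q+r+s)"
    and "transpose_mat (E_mat a b c d e f k l p q r s) *\<^sub>v vec (k+l+p+q+r+s) (\<lambda>_. 1) = 0\<^sub>v (a+b+c+d+e+f)"
  shows "realizable (E_mat a b c d e f k l p q r s) \<longleftrightarrow>
    ((even (a+b) \<and> even (c+d) \<and> even (e+f) \<and> even (k+l) \<and> even (p+q) \<and> even (r+s))
     \<or> (((odd (a+b) \<and> odd (c+d) \<and> odd (e+f)) \<or> (odd (k+l) \<and> odd (p+q) \<and> odd (r+s))) \<and>
        of_nat (e+f) / of_nat (k+l) = (of_nat (c+d) / of_nat (p+q) :: rat) \<and>
        of_nat (c+d) / of_nat (p+q) = (of_nat (a+b) / of_nat (r+s) :: rat)))"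
proof -
  interpret B: blk6 a b c d e f k l p q r s
    by (rule blk6.intro) (use assms in auto)
  show ?thesis
  proof
    assume "realizable (E_mat a b c d e f k l p q r s)"
    then obtain g g' :: int where h: "(odd g \<longleftrightarrow> odd (e+f)) \<and> (odd g \<longleftrightarrow> odd (c+d)) \<and> (odd g \<longleftrightarrow> odd (a+b))
     \<and> (odd g' \<longleftrightarrow> odd (k+l)) \<and> (odd g' \<longleftrightarrow> odd (p+q)) \<and> (odd g' \<longleftrightarrow> odd (r+s))
     \<and> int (k+l) * g = int (e+f) * g' \<and> int (p+q) * g = int (c+d) * g' \<and> int (r+s) * g = int (a+b) * g'"
      using B.nec_core by blast
    show "(even (a+b) \<and> even (c+d) \<and> even (e+f) \<and> even (k+l) \<and> even (p+q) \<and> even (r+s))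
     \<or> (((odd (a+b) \<and> odd (c+d) \<and> odd (e+f)) \<or> (odd (k+l) \<and> odd (p+q) \<and> odd (r+s))) \<and>
        of_nat (e+f) / of_nat (k+l) = (of_nat (c+d) / of_nat (p+q) :: rat) \<and>
        of_nat (c+d) / of_nat (p+q) = (of_nat (a+b) / of_nat (r+s) :: rat))"
      by (rule final_arith[of "a+b" "c+d" "e+f" "k+l" "p+q" "r+s" g g']) (use assms h in auto)
  next
    assume cond: "(even (a+b) \<and> even (c+d) \<and> even (e+f) \<and> even (k+l) \<and> even (p+q) \<and> even (r+s))
     \<or> (((odd (a+b) \<and> odd (c+d) \<and> odd (e+f)) \<or> (odd (k+l) \<and> odd (p+q) \<and> odd (r+s))) \<and>
        of_nat (e+f) / of_nat (k+l) = (of_nat (c+d) / of_nat (p+q) :: rat) \<and>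
        of_nat (c+d) / of_nat (p+q) = (of_nat (a+b) / of_nat (r+s) :: rat))"
    obtain gg hh qc qr :: "nat \<Rightarrow> nat" and ga ga' :: int where
      P: "\<forall>x<3. 0 < gg x \<and> hh x \<le> gg x \<and> int (qc x) * (2 * int (hh x) - int (gg x)) = ga
                \<and> int (qr x) * (2 * int (hh x) - int (gg x)) = ga'"
      and Q: "e+f = gg 0 * qc 0 \<and> k+l = gg 0 * qr 0 \<and> c+d = gg 1 * qc 1 \<and> p+q = gg 1 * qr 1
     \<and> a+b = gg 2 * qc 2 \<and> r+s = gg 2 * qr 2"
      using params[of "a+b" "c+d" "e+f" "k+l" "p+q" "r+s"] assms cond by blast
    have dC: "\<forall>x<3. B.cC (2 - x) = gg x * qc x"
    proof (intro allI impI)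
      fix x :: nat assume "x < 3"
      then have "x = 0 \<or> x = 1 \<or> x = 2" by arith
      then show "B.cC (2 - x) = gg x * qc x" using Q by (elim disjE) (simp_all add: B.cC_def)
    qed
    have dR: "\<forall>x<3. B.cR x = gg x * qr x"
    proof (intro allI impI)
      fix x :: nat assume "x < 3"
      then have "x = 0 \<or> x = 1 \<or> x = 2" by arith
      then show "B.cR x = gg x * qr x" using Q by (elim disjE) (simp_all add: B.cR_def)
    qed
    show "realizable (E_mat a b c d e f k l p q r s)"
      by (rule B.suff_core[OF P dC dR])
  qed
qed

end
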